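(* Let $(\pi_k)_k$ be a sequence of paths in a finite directed multigraph $\Gamma$. If there is an edge $\zeta$ of $\Gamma$ such that the sequence $(|\pi_k|_\zeta)_k$ is unbounded, then there is a cycle $\gamma$ in $\Gamma$ such that the sequence $(|\pi_k|_{c(\gamma)})_k$ is unbounded.
   Context: For a path $\gamma$ in $\Gamma$, its support $c(\gamma)$ is the subgraph of $\Gamma$ induced by the edges traversed by $\gamma$. For a path $\pi$ and an edge $\zeta$, $|\pi|_\zeta$ is the number of times $\pi$ traverses $\zeta$; for a subgraph $\Gamma'$, $|\pi|_{\Gamma'}$ is the minimum of $|\pi|_\zeta$ over all edges $\zeta$ of $\Gamma'$. *)

theory Defs
  imports Main "Graph_Theory.Digraph" "Graph_Theory.Arc_Walk"
begin

definition is_path :: "('a,'b) pre_digraph \<Rightarrow> 'b list \<Rightarrow> bool" where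
  "is_path G p \<longleftrightarrow> (\<exists>u v. pre_digraph.awalk G u p v)"

definition edge_count :: "'b list \<Rightarrow> 'b \<Rightarrow> nat" where
  "edge_count p e = count_list p e"

text \<open>Support c(gamma): the edges traversed by gamma (the subgraph induced by them).\<close>
definition support_arcs :: "'b list \<Rightarrow> 'b set" where
  "support_arcs g = set g"

definition subgraph_count :: "'b list \<Rightarrow> 'b set \<Rightarrow> nat" where
  "subgraph_count p E = Min ((\<lambda>e. edge_count p e) ` E)"

end

theory Submission
  imports Defs
begin

context wf_digraph begin

lemma seg_decomp:
  "awalk (tail G z) (z # c) v \<Longrightarrow>
   \<exists>gs c'. z # c = concat gs @ z # c' \<and> length gs = count_list c z \<and> (\<forall>g\<in>set gs. closed_w g)"
proof (induction "length c" arbitrary: c rule: less_induct)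
  case less
  show ?case
  proof (cases "z \<in> set c")
    case False
    then show ?thesis by (intro exI[of _ "[]"] exI[of _ c]) (simp add: count_list_0_iff)
  next
    case True
    then obtain b d where cd: "c = b @ z # d" and zb: "z \<notin> set b"
      using split_list_first by metis
    have w: "awalk (tail G z) ((z # b) @ (z # d)) v" using less.prems cd by simp
    then have w1: "awalk (tail G z) (z # b) (awlast (tail G z) (z # b))"
      and w2: "awalk (awlast (tail G z) (z # b)) (z # d) v"
      by (simp_all only: awalk_append_iff)
    from w2 have e: "awlast (tail G z) (z # b) = tail G z" by (simp add: awalk_Cons_iff)
    have cl: "closed_w (z # b)" using w1 e unfolding closed_w_def by auto
    have wd: "awalk (tail G z) (z # d) v" using w2 e by simp
    have "length d < length c" using cd by simp
    from less.hyps[OF this wd] obtain gs c' where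
      h: "z # d = concat gs @ z # c'" "length gs = count_list d z" "\<forall>g\<in>set gs. closed_w g"
      by blast
    have "count_list b z = 0" using zb by (simp add: count_list_0_iff)
    have e1: "z # c = concat ((z # b) # gs) @ z # c'"
      using h(1) cd by simp
    have e2: "count_list c z = count_list d z + 1"
      using cd \<open>count_list b z = 0\<close> by (simp add: count_list_append)
    show ?thesis using h cl e1 e2
      by (intro exI[of _ "(z # b) # gs"] exI[of _ c']) auto
  qed
qed

end

lemma length_partition:
  assumes "finite C" "f ` set xs \<subseteq> C"
  shows "length xs = (\<Sum>S\<in>C. length (filter (\<lambda>g. f g = S) xs))"
  using assms(2)
proof (induction xs)
  case Nil then show ?case by simp
next
  case (Cons x xs)
  have "(\<Sum>S\<in>C. length (filter (\<lambda>g. f g = S) (x # xs)))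
      = (\<Sum>S\<in>C. (if f x = S then 1 else 0) + length (filter (\<lambda>g. f g = S) xs))"
    by (intro sum.cong) auto
  also have "\<dots> = (\<Sum>S\<in>C. (if f x = S then 1 else 0)) + (\<Sum>S\<in>C. length (filter (\<lambda>g. f g = S) xs))"
    by (simp add: sum.distrib)
  also have "(\<Sum>S\<in>C. (if f x = S then 1 else 0)) = (1::nat)"
    using Cons.prems assms(1) by (simp add: sum.delta)
  finally show ?case using Cons by simp
qed

lemma count_concat_ge:
  assumes "e \<in> S"
  shows "length (filter (\<lambda>g. set g = S) gs) \<le> count_list (concat gs) e"
  using assms
proof (induction gs)
  case Nil then show ?case by simp
next
  case (Cons g gs)
  have "set g = S \<Longrightarrow> 1 \<le> count_list g e"
    using Cons.prems by (metis One_nat_def Suc_leI count_list_0_iff gr0I)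
  then show ?case using Cons by (auto simp: count_list_append)
qed

theorem lemma3p7:
  fixes G :: "('a,'b) pre_digraph" and \<pi> :: "nat \<Rightarrow> 'b list"
  assumes "fin_digraph G"
    and "\<And>k. is_path G (\<pi> k)"
    and "\<zeta> \<in> arcs G"
    and "\<not> bdd_above (range (\<lambda>k. edge_count (\<pi> k) \<zeta>))"
  shows "\<exists>\<gamma>. wf_digraph.closed_w G \<gamma> \<and>
           \<not> bdd_above (range (\<lambda>k. subgraph_count (\<pi> k) (support_arcs \<gamma>)))"
proof (rule ccontr)
  assume na: "\<not> ?thesis"
  interpret fin_digraph G by fact
  define C where "C = {set g | g. closed_w g}"
  have finC: "finite C"
    by (rule finite_subset[of _ "Pow (arcs G)"])
       (auto simp: C_def closed_w_def awalk_def)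
  have "\<forall>S\<in>C. \<exists>B. \<forall>k. subgraph_count (\<pi> k) S \<le> B"
  proof
    fix S assume "S \<in> C"
    then obtain g where g: "closed_w g" "S = set g" unfolding C_def by blast
    then have "bdd_above (range (\<lambda>k. subgraph_count (\<pi> k) (support_arcs g)))"
      using na g(1) by (meson)
    then show "\<exists>B. \<forall>k. subgraph_count (\<pi> k) S \<le> B"
      using g by (auto simp: bdd_above_def support_arcs_def)
  qed
  then obtain B where B: "\<And>S k. S \<in> C \<Longrightarrow> subgraph_count (\<pi> k) S \<le> B S"
    by metis
  have "edge_count (\<pi> k) \<zeta> \<le> 1 + (\<Sum>S\<in>C. B S)" for k
  proof (cases "\<zeta> \<in> set (\<pi> k)")
    case False
    then show ?thesis by (simp add: edge_count_def count_list_0_iff)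
  next
    case True
    then obtain a c where ac: "\<pi> k = a @ \<zeta> # c" and za: "\<zeta> \<notin> set a"
      using split_list_first by metis
    obtain u v where "awalk u (\<pi> k) v" using assms(2)[of k] unfolding is_path_def by blast
    then have "awalk (awlast u a) (\<zeta> # c) v" using ac by simp
    then have "awalk (tail G \<zeta>) (\<zeta> # c) v" by (simp add: awalk_Cons_iff)
    from seg_decomp[OF this] obtain gs c' where
      h: "\<zeta> # c = concat gs @ \<zeta> # c'" "length gs = count_list c \<zeta>" "\<forall>g\<in>set gs. closed_w g"
      by blast
    have cnt: "edge_count (\<pi> k) \<zeta> = 1 + length gs"
      using ac za h(2) by (simp add: edge_count_def count_list_append count_list_0_iff)
    have sub: "set ` set gs \<subseteq> C" using h(3) unfolding C_def by blast
    have "length (filter (\<lambda>g. set g = S) gs) \<le> B S" if "S \<in> C" for S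
    proof -
      obtain g where g: "closed_w g" "S = set g" using \<open>S \<in> C\<close> unfolding C_def by blast
      have ne: "S \<noteq> {}" using g by (auto simp: closed_w_def)
      have fin: "finite S" using g by simp
      have "length (filter (\<lambda>g. set g = S) gs) \<le> Min ((\<lambda>e. edge_count (\<pi> k) e) ` S)"
      proof (subst Min_ge_iff)
        show "finite ((\<lambda>e. edge_count (\<pi> k) e) ` S)" using fin by simp
        show "(\<lambda>e. edge_count (\<pi> k) e) ` S \<noteq> {}" using ne by simp
        show "\<forall>a\<in>(\<lambda>e. edge_count (\<pi> k) e) ` S. length (filter (\<lambda>g. set g = S) gs) \<le> a"
        proof
          fix x assume "x \<in> (\<lambda>e. edge_count (\<pi> k) e) ` S"
          then obtain e where e: "e \<in> S" "x = edge_count (\<pi> k) e" by blast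
          have "length (filter (\<lambda>g. set g = S) gs) \<le> count_list (concat gs) e"
            by (rule count_concat_ge[OF e(1)])
          also have "\<dots> \<le> count_list (\<pi> k) e"
            using ac h(1) by (simp add: count_list_append)
          finally show "length (filter (\<lambda>g. set g = S) gs) \<le> x" using e by (simp add: edge_count_def)
        qed
      qed
      also have "\<dots> \<le> B S" using B[OF \<open>S \<in> C\<close>, of k] by (simp add: subgraph_count_def)
      finally show ?thesis .
    qed
    then have "(\<Sum>S\<in>C. length (filter (\<lambda>g. set g = S) gs)) \<le> (\<Sum>S\<in>C. B S)"
      by (rule sum_mono)
    then show ?thesis using cnt length_partition[OF finC sub] by simp
  qed
  then have "bdd_above (range (\<lambda>k. edge_count (\<pi> k) \<zeta>))"
    by (auto simp: bdd_above_def)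
  with assms(4) show False by simp
qed

end
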